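(* Let $Y\in\mathbb{R}^n$ satisfy $Y=X\beta+\sigma\xi$ with a deterministic matrix $X\in\mathbb{R}^{n\times p}$ with columns $X_1,\dots,X_p$, $\sigma>0$ and $\xi\sim\mathcal{N}(0,\mathbb{I}_n)$. For any $a>0$, $q\ge1$ and $s<p$, $$\inf_{\hat\beta}\sup_{\beta\in\Omega^p_{s,a}}\mathbf{E}_\beta\big(\|\hat\beta-\beta\|_q^q\big)\ \ge\ \sigma_q^q\max_{S\subseteq\{1,\dots,p\},\,|S|=s}\sum_{i\in S}\frac{1}{\|X_i\|_2^q},$$ where the infimum is over all estimators $\hat\beta$ (measurable functions of $(X,Y)$).
   Context: $\Omega^p_{s,a}=\{\beta\in\mathbb{R}^p:\ |\beta|_0\le s\ \text{and}\ |\beta_i|\ge a\ \forall i\in S_\beta\}$, where $|\beta|_0$ is the number of nonzero entries and $S_\beta$ the set of indices of nonzero entries. $\mathbf{E}_\beta$ is expectation under the model with parameter $\beta$. $\sigma_q:=(\mathbf{E}|\zeta|^q)^{1/q}$ for $\zeta\sim\mathcal{N}(0,\sigma^2)$. $\|\cdot\|_q$ is the $\ell_q$ norm. *)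

theory Defs
  imports "HOL-Probability.Probability"
begin

definition Omega :: "nat \<Rightarrow> real \<Rightarrow> ('p::finite \<Rightarrow> real) set" where
  "Omega s a = {\<beta>. card {i. \<beta> i \<noteq> 0} \<le> s \<and> (\<forall>i. \<beta> i \<noteq> 0 \<longrightarrow> \<bar>\<beta> i\<bar> \<ge> a)}"

definition sigma_q :: "real \<Rightarrow> real \<Rightarrow> real" where
  "sigma_q \<sigma> q = (\<integral>x. normal_density 0 \<sigma> x * \<bar>x\<bar> powr q \<partial>lborel) powr (1 / q)"

definition std_gauss :: "('n::finite \<Rightarrow> real) measure" where
  "std_gauss = PiM UNIV (\<lambda>_. density lborel std_normal_density)"

text \<open>Observation Y = X beta + sigma xi, X an n x p matrix (X j i = entry in row j, column i).\<close>
definition obs :: "('n \<Rightarrow> 'p::finite \<Rightarrow> real) \<Rightarrow> real \<Rightarrow> ('p \<Rightarrow> real) \<Rightarrow> ('n \<Rightarrow> real) \<Rightarrow> ('n \<Rightarrow> real)" where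
  "obs X \<sigma> \<beta> \<xi> = (\<lambda>j. (\<Sum>i\<in>UNIV. X j i * \<beta> i) + \<sigma> * \<xi> j)"

definition col_norm :: "('n::finite \<Rightarrow> 'p \<Rightarrow> real) \<Rightarrow> 'p \<Rightarrow> real" where
  "col_norm X i = sqrt (\<Sum>j\<in>UNIV. (X j i)\<^sup>2)"

end

theory Submission
  imports Defs
begin


lemma indicator_PiE_UNIV:
  "(indicator (PiE UNIV A) y :: ennreal) = (\<Prod>j\<in>(UNIV::'n::finite set). indicator (A j) (y j))"
proof (cases "y \<in> PiE UNIV A")
  case True then show ?thesis by (auto simp: PiE_iff indicator_def)
next
  case False
  then obtain j where "y j \<notin> A j" by (auto simp: PiE_iff)
  then show ?thesis using False by (subst prod_zero) (auto simp: indicator_def intro!: bexI[of _ j])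
qed

lemma PiM_density_UNIV:
  fixes g :: "'n::finite \<Rightarrow> real \<Rightarrow> ennreal"
  assumes g[measurable]: "\<And>j. g j \<in> borel_measurable borel"
    and pr: "\<And>j. prob_space (density lborel (g j))"
  shows "PiM UNIV (\<lambda>j. density lborel (g j)) = density (PiM UNIV (\<lambda>_. lborel)) (\<lambda>y. \<Prod>j\<in>UNIV. g j (y j))"
proof -
  interpret D: product_prob_space "\<lambda>j. density lborel (g j)"
    using pr by (intro product_prob_spaceI) auto
  interpret L: product_sigma_finite "\<lambda>_::'n. lborel :: real measure"
    by (intro product_sigma_finite.intro) (simp add: lborel.sigma_finite_measure_axioms)
  show ?thesis
  proof (rule D.PiM_eqI[symmetric])
    show "finite (UNIV::'n set)" by simp
    show "sets (density (PiM UNIV (\<lambda>_. lborel)) (\<lambda>y. \<Prod>j\<in>UNIV. g j (y j))) = sets (PiM UNIV (\<lambda>j. density lborel (g j)))"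
      by (simp only: sets_density) (intro sets_PiM_cong; simp)
    fix A assume A: "\<And>i. i \<in> UNIV \<Longrightarrow> A i \<in> sets (density lborel (g i))"
    then have A'[measurable]: "\<And>i. A i \<in> sets borel" by simp
    have "emeasure (density (PiM UNIV (\<lambda>_. lborel)) (\<lambda>y. \<Prod>j\<in>UNIV. g j (y j))) (PiE UNIV A)
        = \<integral>\<^sup>+ y. (\<Prod>j\<in>UNIV. g j (y j)) * indicator (PiE UNIV A) y \<partial>PiM UNIV (\<lambda>_. lborel)"
      by (subst emeasure_density) (auto intro!: sets_PiM_I_finite)
    also have "\<dots> = \<integral>\<^sup>+ y. (\<Prod>j\<in>UNIV. g j (y j) * indicator (A j) (y j)) \<partial>PiM UNIV (\<lambda>_. lborel)"
      by (intro nn_integral_cong) (simp add: prod.distrib indicator_PiE_UNIV)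
    also have "\<dots> = (\<Prod>j\<in>UNIV. \<integral>\<^sup>+ x. g j x * indicator (A j) x \<partial>lborel)"
      by (rule L.product_nn_integral_prod) auto
    also have "\<dots> = (\<Prod>j\<in>UNIV. emeasure (density lborel (g j)) (A j))"
      by (intro prod.cong refl) (simp add: emeasure_density)
    finally show "emeasure (density (PiM UNIV (\<lambda>_. lborel)) (\<lambda>y. \<Prod>j\<in>UNIV. g j (y j))) (PiE UNIV A) = (\<Prod>j\<in>UNIV. emeasure (density lborel (g j)) (A j))" .
  qed
qed


lemma distr_PiM_coord:
  fixes M :: "'n::finite \<Rightarrow> 'a measure" and N :: "'n \<Rightarrow> 'b measure"
  assumes pr: "\<And>j. prob_space (M j)"
    and f[measurable]: "\<And>j. f j \<in> M j \<rightarrow>\<^sub>M N j"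
  shows "distr (PiM UNIV M) (PiM UNIV N) (\<lambda>x j. f j (x j)) = PiM UNIV (\<lambda>j. distr (M j) (N j) (f j))"
proof -
  interpret M: product_prob_space M using pr by (intro product_prob_spaceI) auto
  interpret D: product_prob_space "\<lambda>j. distr (M j) (N j) (f j)"
    using pr by (intro product_prob_spaceI) (auto intro: prob_space.prob_space_distr)
  have meas: "(\<lambda>x j. f j (x j)) \<in> PiM UNIV M \<rightarrow>\<^sub>M PiM UNIV N"
  proof (rule measurable_PiM_single')
    show "(\<lambda>x. f j (x j)) \<in> PiM UNIV M \<rightarrow>\<^sub>M N j" for j
      by (rule measurable_compose[OF measurable_component_singleton[of j UNIV M] f]) simp
    show "(\<lambda>x j. f j (x j)) \<in> space (PiM UNIV M) \<rightarrow> (\<Pi>\<^sub>E j\<in>UNIV. space (N j))"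
      by (auto simp: space_PiM PiE_iff intro!: measurable_space[OF f])
  qed
  show ?thesis
  proof (rule D.PiM_eqI)
    show "finite (UNIV::'n set)" by simp
    show "sets (distr (PiM UNIV M) (PiM UNIV N) (\<lambda>x j. f j (x j))) = sets (PiM UNIV (\<lambda>j. distr (M j) (N j) (f j)))"
      by (simp only: sets_distr) (intro sets_PiM_cong; simp)
    fix A assume A: "\<And>i. i \<in> UNIV \<Longrightarrow> A i \<in> sets (distr (M i) (N i) (f i))"
    then have A': "\<And>i. A i \<in> sets (N i)" by simp
    have "emeasure (distr (PiM UNIV M) (PiM UNIV N) (\<lambda>x j. f j (x j))) (PiE UNIV A)
       = emeasure (PiM UNIV M) ((\<lambda>x j. f j (x j)) -` PiE UNIV A \<inter> space (PiM UNIV M))"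
      by (rule emeasure_distr[OF meas]) (auto intro!: sets_PiM_I_finite A')
    also have "(\<lambda>x j. f j (x j)) -` PiE UNIV A \<inter> space (PiM UNIV M) = PiE UNIV (\<lambda>j. f j -` A j \<inter> space (M j))"
      by (auto simp: space_PiM PiE_def Pi_def extensional_def)
    also have "emeasure (PiM UNIV M) (PiE UNIV (\<lambda>j. f j -` A j \<inter> space (M j))) = (\<Prod>j\<in>UNIV. emeasure (M j) (f j -` A j \<inter> space (M j)))"
      using A' by (intro M.emeasure_PiM) auto
    also have "\<dots> = (\<Prod>j\<in>UNIV. emeasure (distr (M j) (N j) (f j)) (A j))"
      using A' by (intro prod.cong refl emeasure_distr[symmetric]) auto
    finally show "emeasure (distr (PiM UNIV M) (PiM UNIV N) (\<lambda>x j. f j (x j))) (PiE UNIV A) = (\<Prod>j\<in>UNIV. emeasure (distr (M j) (N j) (f j)) (A j))" .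
  qed
qed

lemma std_normal_affine:
  fixes \<sigma> t :: real assumes "\<sigma> > 0"
  shows "distr (density lborel (\<lambda>x. ennreal (std_normal_density x))) borel (\<lambda>x. t + \<sigma> * x)
       = density lborel (\<lambda>x. ennreal (normal_density t \<sigma> x))"
proof (rule measure_eqI)
  show "sets (distr (density lborel (\<lambda>x. ennreal (std_normal_density x))) borel (\<lambda>x. t + \<sigma> * x)) = sets (density lborel (\<lambda>x. ennreal (normal_density t \<sigma> x)))"
    by simp
  fix A assume "A \<in> sets (distr (density lborel (\<lambda>x. ennreal (std_normal_density x))) borel (\<lambda>x. t + \<sigma> * x))"
  then have A[measurable]: "A \<in> sets borel" by simp
  have eq: "ennreal (std_normal_density x) = ennreal \<sigma> * ennreal (normal_density t \<sigma> (t + \<sigma> * x))" for x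
    using assms by (simp add: normal_density_def ennreal_mult'[symmetric] real_sqrt_mult power_mult_distrib field_simps)
  have "emeasure (distr (density lborel (\<lambda>x. ennreal (std_normal_density x))) borel (\<lambda>x. t + \<sigma> * x)) A
     = \<integral>\<^sup>+x. ennreal (std_normal_density x) * indicator A (t + \<sigma> * x) \<partial>lborel"
  proof -
    have [measurable]: "(\<lambda>x. t + \<sigma> * x) -` A \<in> sets borel"
      using measurable_sets_borel[of "\<lambda>x. t + \<sigma> * x" borel A] by simp
    show ?thesis
      by (subst emeasure_distr) (auto simp: emeasure_density intro!: nn_integral_cong split: split_indicator)
  qed
  also have "\<dots> = \<integral>\<^sup>+x. ennreal \<sigma> * (ennreal (normal_density t \<sigma> (t + \<sigma> * x)) * indicator A (t + \<sigma> * x)) \<partial>lborel"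
    by (simp add: eq mult.assoc)
  also have "\<dots> = ennreal \<sigma> * \<integral>\<^sup>+x. ennreal (normal_density t \<sigma> (t + \<sigma> * x)) * indicator A (t + \<sigma> * x) \<partial>lborel"
    by (rule nn_integral_cmult) measurable
  also have "\<dots> = \<integral>\<^sup>+x. ennreal (normal_density t \<sigma> x) * indicator A x \<partial>lborel"
    using assms by (subst nn_integral_real_affine[where c=\<sigma> and t=t]) auto
  also have "\<dots> = emeasure (density lborel (\<lambda>x. ennreal (normal_density t \<sigma> x))) A"
    by (simp add: emeasure_density)
  finally show "emeasure (distr (density lborel (\<lambda>x. ennreal (std_normal_density x))) borel (\<lambda>x. t + \<sigma> * x)) A = emeasure (density lborel (\<lambda>x. ennreal (normal_density t \<sigma> x))) A" .
qed

lemma prob_space_nd: "\<sigma> > 0 \<Longrightarrow> prob_space (density lborel (\<lambda>x. ennreal (normal_density t \<sigma> x)))"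
  by (rule prob_space_normal_density)

lemma meas_coord:
  assumes "\<And>j. (\<lambda>x. F j x) \<in> M \<rightarrow>\<^sub>M borel"
  shows "(\<lambda>x (j::'n::finite). F j x :: real) \<in> M \<rightarrow>\<^sub>M PiM UNIV (\<lambda>_. borel)"
  by (rule measurable_PiM_single') (use assms in auto)

lemma sets_PiM_lborel: "sets (PiM UNIV (\<lambda>_::'n. lborel)) = sets (PiM UNIV (\<lambda>_::'n. (borel::real measure)))"
  by (intro sets_PiM_cong) auto

lemma meas_PiM_lborel: "g \<in> PiM UNIV (\<lambda>_::'n. (borel::real measure)) \<rightarrow>\<^sub>M N \<Longrightarrow> g \<in> PiM UNIV (\<lambda>_::'n. lborel) \<rightarrow>\<^sub>M N"
  by (subst measurable_cong_sets[OF sets_PiM_lborel refl])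

lemma sets_std_gauss: "sets std_gauss = sets (PiM UNIV (\<lambda>_. borel))"
  unfolding std_gauss_def by (intro sets_PiM_cong) auto

lemma space_std_gauss: "space std_gauss = UNIV"
  unfolding std_gauss_def by (simp add: space_PiM)

lemma prob_std_gauss: "prob_space std_gauss"
  unfolding std_gauss_def
  by (intro prob_space_PiM) (auto intro: prob_space_normal_density)

lemma gauss_affine:
  fixes g :: "('n::finite \<Rightarrow> real) \<Rightarrow> ennreal" and t :: "'n \<Rightarrow> real"
  assumes "\<sigma> > 0" and g[measurable]: "g \<in> borel_measurable (PiM UNIV (\<lambda>_. borel))"
  shows "(\<integral>\<^sup>+\<xi>. g (\<lambda>j. t j + \<sigma> * \<xi> j) \<partial>std_gauss)
       = \<integral>\<^sup>+y. ennreal (\<Prod>j\<in>UNIV. normal_density (t j) \<sigma> (y j)) * g y \<partial>PiM UNIV (\<lambda>_. lborel)"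
proof -
  have m: "(\<lambda>x j. t j + \<sigma> * x j) \<in> std_gauss \<rightarrow>\<^sub>M PiM UNIV (\<lambda>_. borel)"
    by (subst measurable_cong_sets[OF sets_std_gauss refl], intro meas_coord) measurable
  have "(\<integral>\<^sup>+\<xi>. g (\<lambda>j. t j + \<sigma> * \<xi> j) \<partial>std_gauss) = \<integral>\<^sup>+y. g y \<partial>distr std_gauss (PiM UNIV (\<lambda>_. borel)) (\<lambda>x j. t j + \<sigma> * x j)"
    by (subst nn_integral_distr[OF m]) auto
  also have "distr std_gauss (PiM UNIV (\<lambda>_. borel)) (\<lambda>x j. t j + \<sigma> * x j) = PiM UNIV (\<lambda>j. distr (density lborel (\<lambda>x. ennreal (std_normal_density x))) borel (\<lambda>x. t j + \<sigma> * x))"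
    unfolding std_gauss_def
    by (rule distr_PiM_coord[where f="\<lambda>j x. t j + \<sigma> * x"]) (auto intro: prob_space_normal_density)
  also have "\<dots> = PiM UNIV (\<lambda>j. density lborel (\<lambda>x. ennreal (normal_density (t j) \<sigma> x)))"
    using assms by (simp add: std_normal_affine)
  also have "\<dots> = density (PiM UNIV (\<lambda>_. lborel)) (\<lambda>y. \<Prod>j\<in>UNIV. ennreal (normal_density (t j) \<sigma> (y j)))"
    using assms by (intro PiM_density_UNIV) (auto intro: prob_space_normal_density)
  also have "(\<integral>\<^sup>+y. g y \<partial>\<dots>) = \<integral>\<^sup>+y. (\<Prod>j\<in>UNIV. ennreal (normal_density (t j) \<sigma> (y j))) * g y \<partial>PiM UNIV (\<lambda>_. lborel)"
    by (subst nn_integral_density) (auto intro!: meas_PiM_lborel)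
  finally show ?thesis by (simp add: prod_ennreal)
qed



lemma powr_midpoint:
  fixes a b q :: real assumes "a \<ge> 0" "b \<ge> 0" "q \<ge> 1"
  shows "((a + b) / 2) powr q \<le> (a powr q + b powr q) / 2"
proof (cases "a = 0 \<or> b = 0")
  case True
  have k: "(x / 2) powr q \<le> x powr q / 2" if "x \<ge> 0" for x :: real
  proof -
    have "(x / 2) powr q = x powr q / 2 powr q" using that by (simp add: powr_divide)
    also have "\<dots> \<le> x powr q / 2"
    proof (rule divide_left_mono)
      show "2 \<le> 2 powr q" using powr_mono[of 1 q 2] assms by simp
    qed auto
    finally show ?thesis .
  qed
  from True show ?thesis
  proof
    assume "a = 0" then show ?thesis using k[of b] assms by simp
  next
    assume "b = 0" then show ?thesis using k[of a] assms by simp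
  qed
next
  case False
  then have ab: "a > 0" "b > 0" using assms by auto
  have "((1 - 1/2) *\<^sub>R a + (1/2) *\<^sub>R b) powr q \<le> (1 - 1/2) * a powr q + (1/2) * b powr q"
    by (rule convex_onD[OF powr_convex[OF assms(3)]]) (use ab in auto)
  then show ?thesis by (simp add: field_simps)
qed

lemma abs_powr_sym:
  fixes c u q :: real assumes "q \<ge> 1"
  shows "\<bar>u\<bar> powr q \<le> (\<bar>c - u\<bar> powr q + \<bar>c + u\<bar> powr q) / 2"
proof -
  have "\<bar>u\<bar> \<le> (\<bar>c - u\<bar> + \<bar>c + u\<bar>) / 2"
    using abs_triangle_ineq4[of "c + u" "c - u"] by simp
  then have "\<bar>u\<bar> powr q \<le> ((\<bar>c - u\<bar> + \<bar>c + u\<bar>) / 2) powr q"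
    using assms by (intro powr_mono2) auto
  also have "\<dots> \<le> (\<bar>c - u\<bar> powr q + \<bar>c + u\<bar> powr q) / 2"
    using assms by (intro powr_midpoint) auto
  finally show ?thesis .
qed

lemma symmetrize:
  fixes w :: "real \<Rightarrow> real" and J :: "real set" and c t q :: real
  assumes w[measurable]: "w \<in> borel_measurable borel" and wnn: "\<And>u. w u \<ge> 0"
    and weven: "\<And>u. w (- u) = w u" and q: "q \<ge> 1" and J[measurable]: "J \<in> sets borel"
  shows "(\<integral>\<^sup>+u. ennreal (indicator J (t + u) * indicator J (t - u) * w u * \<bar>u\<bar> powr q) \<partial>lborel)
       \<le> (\<integral>\<^sup>+\<theta>. ennreal (indicator J \<theta> * w (\<theta> - t) * \<bar>c - \<theta>\<bar> powr q) \<partial>lborel)"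
proof -
  define c' where "c' = c - t"
  define W where "W u = indicator J (t + u) * indicator J (t - u) * w u" for u
  have Wnn: "W u \<ge> 0" for u using wnn by (simp add: W_def)
  have [measurable]: "W \<in> borel_measurable borel" unfolding W_def by measurable
  have A1: "(\<integral>\<^sup>+u. ennreal (W u * \<bar>c' - u\<bar> powr q) \<partial>lborel) \<le> (\<integral>\<^sup>+\<theta>. ennreal (indicator J \<theta> * w (\<theta> - t) * \<bar>c - \<theta>\<bar> powr q) \<partial>lborel)"
  proof -
    have "(\<integral>\<^sup>+\<theta>. ennreal (indicator J \<theta> * w (\<theta> - t) * \<bar>c - \<theta>\<bar> powr q) \<partial>lborel)
        = \<integral>\<^sup>+u. ennreal (indicator J (t + 1 * u) * w (t + 1 * u - t) * \<bar>c - (t + 1 * u)\<bar> powr q) \<partial>lborel"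
      by (subst nn_integral_real_affine[where c=1 and t=t]) auto
    also have "\<dots> \<ge> (\<integral>\<^sup>+u. ennreal (W u * \<bar>c' - u\<bar> powr q) \<partial>lborel)"
      using wnn by (intro nn_integral_mono ennreal_leI) (auto simp: W_def c'_def indicator_def algebra_simps)
    finally show ?thesis .
  qed
  have A2: "(\<integral>\<^sup>+u. ennreal (W u * \<bar>c' - u\<bar> powr q) \<partial>lborel) = (\<integral>\<^sup>+u. ennreal (W u * \<bar>c' + u\<bar> powr q) \<partial>lborel)"
  proof -
    have "(\<integral>\<^sup>+u. ennreal (W u * \<bar>c' - u\<bar> powr q) \<partial>lborel) = \<integral>\<^sup>+u. ennreal (W (0 + (-1) * u) * \<bar>c' - (0 + (-1) * u)\<bar> powr q) \<partial>lborel"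
      by (subst nn_integral_real_affine[where c="-1" and t=0]) auto
    also have "\<dots> = (\<integral>\<^sup>+u. ennreal (W u * \<bar>c' + u\<bar> powr q) \<partial>lborel)"
      by (intro nn_integral_cong) (simp add: W_def weven mult.commute)
    finally show ?thesis .
  qed
  have "(\<integral>\<^sup>+u. ennreal (W u * \<bar>u\<bar> powr q) \<partial>lborel)
      \<le> \<integral>\<^sup>+u. ennreal (1/2) * (ennreal (W u * \<bar>c' - u\<bar> powr q) + ennreal (W u * \<bar>c' + u\<bar> powr q)) \<partial>lborel"
  proof (intro nn_integral_mono)
    fix u
    have "W u * \<bar>u\<bar> powr q \<le> W u * ((\<bar>c' - u\<bar> powr q + \<bar>c' + u\<bar> powr q) / 2)"
      using abs_powr_sym[OF q, of u c'] Wnn[of u] by (intro mult_left_mono) auto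
    also have "\<dots> = 1/2 * (W u * \<bar>c' - u\<bar> powr q + W u * \<bar>c' + u\<bar> powr q)"
      by (simp add: field_simps)
    finally have le: "W u * \<bar>u\<bar> powr q \<le> 1/2 * (W u * \<bar>c' - u\<bar> powr q + W u * \<bar>c' + u\<bar> powr q)" .
    have eq: "ennreal (1/2 * (W u * \<bar>c' - u\<bar> powr q + W u * \<bar>c' + u\<bar> powr q)) = ennreal (1/2) * (ennreal (W u * \<bar>c' - u\<bar> powr q) + ennreal (W u * \<bar>c' + u\<bar> powr q))"
    proof -
      have a0: "0 \<le> W u * \<bar>c' - u\<bar> powr q" "0 \<le> W u * \<bar>c' + u\<bar> powr q" using Wnn[of u] by auto
      have "ennreal (1/2 * (W u * \<bar>c' - u\<bar> powr q + W u * \<bar>c' + u\<bar> powr q)) = ennreal (1/2) * ennreal (W u * \<bar>c' - u\<bar> powr q + W u * \<bar>c' + u\<bar> powr q)"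
        by (rule ennreal_mult) (use a0 in auto)
      also have "ennreal (W u * \<bar>c' - u\<bar> powr q + W u * \<bar>c' + u\<bar> powr q) = ennreal (W u * \<bar>c' - u\<bar> powr q) + ennreal (W u * \<bar>c' + u\<bar> powr q)"
        by (rule ennreal_plus) (use a0 in auto)
      finally show ?thesis .
    qed
    show "ennreal (W u * \<bar>u\<bar> powr q) \<le> ennreal (1/2) * (ennreal (W u * \<bar>c' - u\<bar> powr q) + ennreal (W u * \<bar>c' + u\<bar> powr q))"
      unfolding eq[symmetric] by (rule ennreal_leI[OF le])
  qed
  also have "\<dots> = ennreal (1/2) * ((\<integral>\<^sup>+u. ennreal (W u * \<bar>c' - u\<bar> powr q) \<partial>lborel) + (\<integral>\<^sup>+u. ennreal (W u * \<bar>c' + u\<bar> powr q) \<partial>lborel))"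
    by (subst nn_integral_cmult) (auto simp: nn_integral_add)
  also have "\<dots> = (\<integral>\<^sup>+u. ennreal (W u * \<bar>c' - u\<bar> powr q) \<partial>lborel)"
  proof -
    have i2: "inverse (2::ennreal) * 2 = 1"
      using ennreal_divide_self[of 2] by (simp add: divide_ennreal_def mult.commute)
    show ?thesis
      unfolding A2[symmetric] by (simp add: mult_2[symmetric] mult.assoc[symmetric] i2 del: ennreal_numeral)
  qed
  finally show ?thesis using A1 by (simp add: W_def)
qed



lemma sum_sq_expand:
  fixes y v :: "'n::finite \<Rightarrow> real"
  shows "(\<Sum>j\<in>UNIV. (y j - \<theta> * v j)\<^sup>2) = (\<Sum>j\<in>UNIV. (y j)\<^sup>2) - 2 * \<theta> * (\<Sum>j\<in>UNIV. v j * y j) + \<theta>\<^sup>2 * (\<Sum>j\<in>UNIV. (v j)\<^sup>2)"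
  by (simp add: power2_eq_square algebra_simps sum.distrib sum_subtractf sum_distrib_left)

lemma complete_square:
  fixes y v :: "'n::finite \<Rightarrow> real"
  assumes "\<sigma> > 0" and Svv: "(\<Sum>j\<in>UNIV. (v j)\<^sup>2) > 0"
  shows "(\<Prod>j\<in>UNIV. normal_density (\<theta> * v j) \<sigma> (y j))
     = ((1 / sqrt (2 * pi * \<sigma>\<^sup>2)) ^ CARD('n) * sqrt (2 * pi * (\<sigma> / sqrt (\<Sum>j\<in>UNIV. (v j)\<^sup>2))\<^sup>2)
         * exp (- ((\<Sum>j\<in>UNIV. (y j)\<^sup>2) - (\<Sum>j\<in>UNIV. v j * y j)\<^sup>2 / (\<Sum>j\<in>UNIV. (v j)\<^sup>2)) / (2 * \<sigma>\<^sup>2)))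
       * normal_density ((\<Sum>j\<in>UNIV. v j * y j) / (\<Sum>j\<in>UNIV. (v j)\<^sup>2)) (\<sigma> / sqrt (\<Sum>j\<in>UNIV. (v j)\<^sup>2)) \<theta>"
proof -
  define Sy where "Sy = (\<Sum>j\<in>UNIV. (y j)\<^sup>2)"
  define Svy where "Svy = (\<Sum>j\<in>UNIV. v j * y j)"
  define S where "S = (\<Sum>j\<in>UNIV. (v j)\<^sup>2)"
  define K where "K = 1 / sqrt (2 * pi * \<sigma>\<^sup>2)"
  have S0: "S > 0" using Svv by (simp add: S_def)
  have tau2: "(\<sigma> / sqrt S)\<^sup>2 = \<sigma>\<^sup>2 / S" using S0 by (simp add: power_divide)
  have "(\<Prod>j\<in>UNIV. normal_density (\<theta> * v j) \<sigma> (y j)) = (\<Prod>j\<in>UNIV. K * exp (- (y j - \<theta> * v j)\<^sup>2 / (2 * \<sigma>\<^sup>2)))"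
    by (simp add: normal_density_def K_def)
  also have "\<dots> = K ^ CARD('n) * exp (\<Sum>j\<in>UNIV. - (y j - \<theta> * v j)\<^sup>2 / (2 * \<sigma>\<^sup>2))"
    by (simp add: prod.distrib exp_sum)
  also have "(\<Sum>j\<in>UNIV. - (y j - \<theta> * v j)\<^sup>2 / (2 * \<sigma>\<^sup>2)) = - (\<Sum>j\<in>UNIV. (y j - \<theta> * v j)\<^sup>2) / (2 * \<sigma>\<^sup>2)"
    by (simp add: sum_divide_distrib sum_negf)
  also have "\<dots> = - (Sy - Svy\<^sup>2 / S) / (2 * \<sigma>\<^sup>2) + (- (\<theta> - Svy / S)\<^sup>2 / (2 * (\<sigma> / sqrt S)\<^sup>2))"
    unfolding sum_sq_expand tau2 Sy_def[symmetric] Svy_def[symmetric] S_def[symmetric] using S0 assms(1)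
    by (simp add: field_simps power2_eq_square)
  also have "K ^ CARD('n) * exp (- (Sy - Svy\<^sup>2 / S) / (2 * \<sigma>\<^sup>2) + (- (\<theta> - Svy / S)\<^sup>2 / (2 * (\<sigma> / sqrt S)\<^sup>2)))
      = (K ^ CARD('n) * sqrt (2 * pi * (\<sigma> / sqrt S)\<^sup>2) * exp (- (Sy - Svy\<^sup>2 / S) / (2 * \<sigma>\<^sup>2)))
        * normal_density (Svy / S) (\<sigma> / sqrt S) \<theta>"
    using S0 assms(1) by (simp add: normal_density_def exp_add[symmetric] exp_diff)
  finally show ?thesis by (simp add: K_def Sy_def Svy_def S_def)
qed



lemma sf_P: "sigma_finite_measure (PiM UNIV (\<lambda>_::'n::finite. (lborel::real measure)))"
  by (intro product_sigma_finite.sigma_finite product_sigma_finite.intro) (auto simp: lborel.sigma_finite_measure_axioms)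

lemma sf_gauss: "sigma_finite_measure (std_gauss :: ('n::finite \<Rightarrow> real) measure)"
  using prob_std_gauss by (rule prob_space_imp_sigma_finite)

lemma pair_lborel_P: "pair_sigma_finite lborel (PiM UNIV (\<lambda>_::'n::finite. (lborel::real measure)))"
  by (intro pair_sigma_finite.intro lborel.sigma_finite_measure_axioms sf_P)

lemma pair_lborel_gauss: "pair_sigma_finite lborel (std_gauss :: ('n::finite \<Rightarrow> real) measure)"
  by (intro pair_sigma_finite.intro lborel.sigma_finite_measure_axioms sf_gauss)

lemma sets_pair_P: "sets (lborel \<Otimes>\<^sub>M PiM UNIV (\<lambda>_::'n::finite. lborel)) = sets (borel \<Otimes>\<^sub>M PiM UNIV (\<lambda>_::'n. (borel :: real measure)))"
  by (intro sets_pair_measure_cong sets_PiM_lborel) simp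

lemma sets_pair_gauss: "sets (lborel \<Otimes>\<^sub>M (std_gauss :: ('n::finite \<Rightarrow> real) measure)) = sets (borel \<Otimes>\<^sub>M PiM UNIV (\<lambda>_::'n. (borel :: real measure)))"
  by (intro sets_pair_measure_cong sets_std_gauss) simp

declare meas_coord[measurable (raw)]

lemma nd_integral_1: "\<tau> > 0 \<Longrightarrow> (\<integral>\<^sup>+x. ennreal (normal_density t \<tau> x) \<partial>lborel) = 1"
  using prob_space.emeasure_space_1[OF prob_space_normal_density[of \<tau> t]]
  by (simp add: emeasure_density)

lemma nd_shift: "normal_density t \<tau> x = normal_density 0 \<tau> (x - t)"
  by (simp add: normal_density_def)

lemma nd_even: "normal_density 0 \<tau> (- x) = normal_density 0 \<tau> x"
  by (simp add: normal_density_def)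

lemma interval_ind:
  fixes c0 L t u :: real
  shows "indicator {c0..c0+L} (t + u) * indicator {c0..c0+L} (t - u) = (indicator {c0 + \<bar>u\<bar>..c0 + L - \<bar>u\<bar>} t :: real)"
  by (auto simp: indicator_def abs_if)

lemma lebesgue_int_h:
  fixes K :: "real \<Rightarrow> real"
  assumes [measurable]: "K \<in> borel_measurable borel" and Knn: "\<And>u. K u \<ge> 0"
  shows "(\<integral>\<^sup>+t. (\<integral>\<^sup>+u. ennreal (indicator {c0..c0+L} (t + u) * indicator {c0..c0+L} (t - u) * K u) \<partial>lborel) \<partial>lborel)
       = (\<integral>\<^sup>+u. ennreal (K u * max 0 (L - 2 * \<bar>u\<bar>)) \<partial>lborel)"
proof -
  have "(\<integral>\<^sup>+t. (\<integral>\<^sup>+u. ennreal (indicator {c0..c0+L} (t + u) * indicator {c0..c0+L} (t - u) * K u) \<partial>lborel) \<partial>lborel)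
      = (\<integral>\<^sup>+u. (\<integral>\<^sup>+t. ennreal (indicator {c0..c0+L} (t + u) * indicator {c0..c0+L} (t - u) * K u) \<partial>lborel) \<partial>lborel)"
    by (rule lborel_pair.Fubini') measurable
  also have "\<dots> = (\<integral>\<^sup>+u. ennreal (K u * max 0 (L - 2 * \<bar>u\<bar>)) \<partial>lborel)"
  proof (intro nn_integral_cong)
    fix u
    have "(\<integral>\<^sup>+t. ennreal (indicator {c0..c0+L} (t + u) * indicator {c0..c0+L} (t - u) * K u) \<partial>lborel)
        = (\<integral>\<^sup>+t. ennreal (K u) * indicator {c0 + \<bar>u\<bar>..c0 + L - \<bar>u\<bar>} t \<partial>lborel)"
      by (intro nn_integral_cong) (auto simp: interval_ind[symmetric] indicator_def)
    also have "\<dots> = ennreal (K u) * emeasure lborel {c0 + \<bar>u\<bar>..c0 + L - \<bar>u\<bar>}"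
      by (simp add: nn_integral_cmult_indicator)
    also have "emeasure lborel {c0 + \<bar>u\<bar>..c0 + L - \<bar>u\<bar>} = ennreal (max 0 (L - 2 * \<bar>u\<bar>))"
      by (cases "c0 + \<bar>u\<bar> \<le> c0 + L - \<bar>u\<bar>") (auto simp: max_def)
    finally show "(\<integral>\<^sup>+t. ennreal (indicator {c0..c0+L} (t + u) * indicator {c0..c0+L} (t - u) * K u) \<partial>lborel) = ennreal (K u * max 0 (L - 2 * \<bar>u\<bar>))"
      using Knn[of u] by (simp add: ennreal_mult)
  qed
  finally show ?thesis .
qed

lemma core:
  fixes f :: "('n::finite \<Rightarrow> real) \<Rightarrow> real" and m v :: "'n \<Rightarrow> real"
  assumes f[measurable]: "f \<in> borel_measurable (PiM UNIV (\<lambda>_. borel))"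
    and \<sigma>: "\<sigma> > 0" and q: "q \<ge> 1" and Svv: "(\<Sum>j\<in>UNIV. (v j)\<^sup>2) > 0"
  shows "(\<integral>\<^sup>+u. ennreal (normal_density 0 (\<sigma> / sqrt (\<Sum>j\<in>UNIV. (v j)\<^sup>2)) u * \<bar>u\<bar> powr q * max 0 (L - 2 * \<bar>u\<bar>)) \<partial>lborel)
      \<le> (\<integral>\<^sup>+\<theta>. (\<integral>\<^sup>+\<xi>. ennreal (\<bar>f (\<lambda>j. m j + \<theta> * v j + \<sigma> * \<xi> j) - \<theta>\<bar> powr q) \<partial>std_gauss) * indicator {c0..c0+L} \<theta> \<partial>lborel)"
proof -
  define P where "P = PiM UNIV (\<lambda>_::'n. (lborel::real measure))"
  define S where "S = (\<Sum>j\<in>UNIV. (v j)\<^sup>2)"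
  define \<tau> where "\<tau> = \<sigma> / sqrt S"
  define J where "J = {c0..c0+L}"
  define th where "th y = (\<Sum>j\<in>UNIV. v j * y j) / S" for y :: "'n \<Rightarrow> real"
  define Cy where "Cy y = (1 / sqrt (2 * pi * \<sigma>\<^sup>2)) ^ CARD('n) * sqrt (2 * pi * (\<sigma> / sqrt S)\<^sup>2)
         * exp (- ((\<Sum>j\<in>UNIV. (y j)\<^sup>2) - (\<Sum>j\<in>UNIV. v j * y j)\<^sup>2 / S) / (2 * \<sigma>\<^sup>2))" for y :: "'n \<Rightarrow> real"
  define h where "h t = (\<integral>\<^sup>+u. ennreal (indicator J (t + u) * indicator J (t - u) * normal_density 0 \<tau> u * \<bar>u\<bar> powr q) \<partial>lborel)" for t
  define F where "F \<theta> y = ennreal (indicator J \<theta> * (\<Prod>j\<in>UNIV. normal_density (\<theta> * v j) \<sigma> (y j)) * \<bar>f (\<lambda>j. m j + y j) - \<theta>\<bar> powr q)" for \<theta> y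
  have S0: "S > 0" using Svv by (simp add: S_def)
  have \<tau>0: "\<tau> > 0" using S0 \<sigma> by (simp add: \<tau>_def)
  have Cy0: "Cy y \<ge> 0" for y by (simp add: Cy_def)
  have cs: "(\<Prod>j\<in>UNIV. normal_density (\<theta> * v j) \<sigma> (y j)) = Cy y * normal_density (th y) \<tau> \<theta>" for \<theta> y
    using complete_square[OF \<sigma> Svv, of \<theta> y] by (simp add: Cy_def th_def \<tau>_def S_def)
  have [measurable]: "J \<in> sets borel" by (simp add: J_def)
  have [measurable]: "th \<in> borel_measurable (PiM UNIV (\<lambda>_. borel))" unfolding th_def by measurable
  have [measurable]: "Cy \<in> borel_measurable (PiM UNIV (\<lambda>_. borel))" unfolding Cy_def by measurable
  have hm[measurable]: "h \<in> borel_measurable borel" unfolding h_def normal_density_def by measurable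
  interpret LP: pair_sigma_finite lborel P unfolding P_def by (rule pair_lborel_P)
  interpret LG: pair_sigma_finite lborel "std_gauss :: ('n \<Rightarrow> real) measure" by (rule pair_lborel_gauss)
  interpret G: prob_space "std_gauss :: ('n \<Rightarrow> real) measure" by (rule prob_std_gauss)
  have Fm: "case_prod F \<in> borel_measurable (lborel \<Otimes>\<^sub>M P)"
    unfolding P_def F_def measurable_cong_sets[OF sets_pair_P refl] normal_density_def by measurable
  have stepA: "(\<integral>\<^sup>+\<xi>. ennreal (\<bar>f (\<lambda>j. m j + \<theta> * v j + \<sigma> * \<xi> j) - \<theta>\<bar> powr q) \<partial>std_gauss) * indicator J \<theta>
      = (\<integral>\<^sup>+y. F \<theta> y \<partial>P)" for \<theta>
  proof -
    have "(\<integral>\<^sup>+\<xi>. ennreal (\<bar>f (\<lambda>j. m j + \<theta> * v j + \<sigma> * \<xi> j) - \<theta>\<bar> powr q) \<partial>std_gauss)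
        = (\<integral>\<^sup>+\<xi>. (\<lambda>y. ennreal (\<bar>f (\<lambda>j. m j + y j) - \<theta>\<bar> powr q)) (\<lambda>j. \<theta> * v j + \<sigma> * \<xi> j) \<partial>std_gauss)"
      by (simp add: add.assoc)
    also have "\<dots> = (\<integral>\<^sup>+y. ennreal (\<Prod>j\<in>UNIV. normal_density (\<theta> * v j) \<sigma> (y j)) * ennreal (\<bar>f (\<lambda>j. m j + y j) - \<theta>\<bar> powr q) \<partial>P)"
      unfolding P_def by (rule gauss_affine[OF \<sigma>]) measurable
    finally have "(\<integral>\<^sup>+\<xi>. ennreal (\<bar>f (\<lambda>j. m j + \<theta> * v j + \<sigma> * \<xi> j) - \<theta>\<bar> powr q) \<partial>std_gauss) * indicator J \<theta>
        = (\<integral>\<^sup>+y. ennreal (\<Prod>j\<in>UNIV. normal_density (\<theta> * v j) \<sigma> (y j)) * ennreal (\<bar>f (\<lambda>j. m j + y j) - \<theta>\<bar> powr q) * indicator J \<theta> \<partial>P)"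
      by (simp add: nn_integral_multc P_def normal_density_def)
    also have "\<dots> = (\<integral>\<^sup>+y. F \<theta> y \<partial>P)"
      by (intro nn_integral_cong) (auto simp: F_def indicator_def ennreal_mult prod_nonneg)
    finally show ?thesis .
  qed
  have RHS: "(\<integral>\<^sup>+\<theta>. (\<integral>\<^sup>+\<xi>. ennreal (\<bar>f (\<lambda>j. m j + \<theta> * v j + \<sigma> * \<xi> j) - \<theta>\<bar> powr q) \<partial>std_gauss) * indicator J \<theta> \<partial>lborel)
      = (\<integral>\<^sup>+y. (\<integral>\<^sup>+\<theta>. F \<theta> y \<partial>lborel) \<partial>P)"
    unfolding stepA by (rule LP.Fubini'[symmetric, OF Fm])
  have stepC: "ennreal (Cy y) * h (th y) \<le> (\<integral>\<^sup>+\<theta>. F \<theta> y \<partial>lborel)" for y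
  proof -
    have "(\<integral>\<^sup>+\<theta>. F \<theta> y \<partial>lborel) = (\<integral>\<^sup>+\<theta>. ennreal (Cy y) * ennreal (indicator J \<theta> * normal_density 0 \<tau> (\<theta> - th y) * \<bar>f (\<lambda>j. m j + y j) - \<theta>\<bar> powr q) \<partial>lborel)"
      by (intro nn_integral_cong) (simp add: F_def cs nd_shift[of "th y"] Cy0 ennreal_mult[symmetric] mult_ac)
    also have "\<dots> = ennreal (Cy y) * (\<integral>\<^sup>+\<theta>. ennreal (indicator J \<theta> * normal_density 0 \<tau> (\<theta> - th y) * \<bar>f (\<lambda>j. m j + y j) - \<theta>\<bar> powr q) \<partial>lborel)"
      by (rule nn_integral_cmult) (unfold normal_density_def, measurable)
    finally have eq: "(\<integral>\<^sup>+\<theta>. F \<theta> y \<partial>lborel) = ennreal (Cy y) * (\<integral>\<^sup>+\<theta>. ennreal (indicator J \<theta> * normal_density 0 \<tau> (\<theta> - th y) * \<bar>f (\<lambda>j. m j + y j) - \<theta>\<bar> powr q) \<partial>lborel)" .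
    have "h (th y) \<le> (\<integral>\<^sup>+\<theta>. ennreal (indicator J \<theta> * normal_density 0 \<tau> (\<theta> - th y) * \<bar>f (\<lambda>j. m j + y j) - \<theta>\<bar> powr q) \<partial>lborel)"
      unfolding h_def
      by (rule symmetrize[where w="normal_density 0 \<tau>"]) (auto simp: nd_even q)
    then show ?thesis unfolding eq by (rule mult_left_mono) simp
  qed
  have RHS2: "(\<integral>\<^sup>+y. ennreal (Cy y) * h (th y) \<partial>P) \<le> (\<integral>\<^sup>+y. (\<integral>\<^sup>+\<theta>. F \<theta> y \<partial>lborel) \<partial>P)"
    by (intro nn_integral_mono stepC)
  define G where "G \<theta> y = ennreal (\<Prod>j\<in>UNIV. normal_density (\<theta> * v j) \<sigma> (y j)) * h (th y)" for \<theta> y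
  have Gm: "case_prod G \<in> borel_measurable (lborel \<Otimes>\<^sub>M P)"
    unfolding P_def G_def measurable_cong_sets[OF sets_pair_P refl] normal_density_def by measurable
  have stepD: "(\<integral>\<^sup>+\<theta>. G \<theta> y \<partial>lborel) = ennreal (Cy y) * h (th y)" for y
  proof -
    have "(\<integral>\<^sup>+\<theta>. G \<theta> y \<partial>lborel) = (\<integral>\<^sup>+\<theta>. (ennreal (Cy y) * h (th y)) * ennreal (normal_density (th y) \<tau> \<theta>) \<partial>lborel)"
      by (intro nn_integral_cong) (simp add: G_def cs Cy0 ennreal_mult mult_ac)
    also have "\<dots> = (ennreal (Cy y) * h (th y)) * (\<integral>\<^sup>+\<theta>. ennreal (normal_density (th y) \<tau> \<theta>) \<partial>lborel)"
      by (rule nn_integral_cmult) measurable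
    also have "\<dots> = ennreal (Cy y) * h (th y)" using nd_integral_1[OF \<tau>0] by simp
    finally show ?thesis .
  qed
  have thW: "th (\<lambda>j. \<theta> * v j + \<sigma> * \<xi> j) = \<theta> + \<sigma> * (\<Sum>j\<in>UNIV. v j * \<xi> j) / S" for \<theta> \<xi>
  proof -
    have "(\<Sum>j\<in>UNIV. v j * (\<theta> * v j + \<sigma> * \<xi> j)) = \<theta> * S + \<sigma> * (\<Sum>j\<in>UNIV. v j * \<xi> j)"
      by (simp add: S_def algebra_simps sum.distrib sum_distrib_left power2_eq_square)
    then show ?thesis using S0 by (simp add: th_def field_simps)
  qed
  define W where "W \<xi> = \<sigma> * (\<Sum>j\<in>UNIV. v j * \<xi> j) / S" for \<xi> :: "'n \<Rightarrow> real"
  have stepF: "(\<integral>\<^sup>+y. G \<theta> y \<partial>P) = (\<integral>\<^sup>+\<xi>. h (\<theta> + W \<xi>) \<partial>std_gauss)" for \<theta>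
  proof -
    have "(\<integral>\<^sup>+\<xi>. h (\<theta> + W \<xi>) \<partial>std_gauss) = (\<integral>\<^sup>+\<xi>. (\<lambda>y. h (th y)) (\<lambda>j. \<theta> * v j + \<sigma> * \<xi> j) \<partial>std_gauss)"
      by (simp add: thW W_def)
    also have "\<dots> = (\<integral>\<^sup>+y. G \<theta> y \<partial>P)"
      unfolding P_def G_def by (rule gauss_affine[OF \<sigma>]) measurable
    finally show ?thesis ..
  qed
  have HGm: "case_prod (\<lambda>\<theta> \<xi>. h (\<theta> + W \<xi>)) \<in> borel_measurable (lborel \<Otimes>\<^sub>M std_gauss)"
    unfolding W_def measurable_cong_sets[OF sets_pair_gauss refl] by measurable
  have stepG: "(\<integral>\<^sup>+\<theta>. (\<integral>\<^sup>+\<xi>. h (\<theta> + W \<xi>) \<partial>std_gauss) \<partial>lborel) = (\<integral>\<^sup>+t. h t \<partial>lborel)"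
  proof -
    have "(\<integral>\<^sup>+\<theta>. (\<integral>\<^sup>+\<xi>. h (\<theta> + W \<xi>) \<partial>std_gauss) \<partial>lborel) = (\<integral>\<^sup>+\<xi>. (\<integral>\<^sup>+\<theta>. h (\<theta> + W \<xi>) \<partial>lborel) \<partial>std_gauss)"
      by (rule LG.Fubini'[symmetric, OF HGm])
    also have "\<dots> = (\<integral>\<^sup>+\<xi>. (\<integral>\<^sup>+t. h t \<partial>lborel) \<partial>(std_gauss :: ('n \<Rightarrow> real) measure))"
    proof -
      have pt: "(\<integral>\<^sup>+\<theta>. h (\<theta> + W \<xi>) \<partial>lborel) = integral\<^sup>N lborel h" for \<xi>
        using nn_integral_real_affine[OF hm, of 1 "W \<xi>"] by (simp add: add.commute)
      show ?thesis by (simp only: pt)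
    qed
    also have "\<dots> = (\<integral>\<^sup>+t. h t \<partial>lborel)"
      by (simp add: G.emeasure_space_1)
    finally show ?thesis .
  qed
  have stepH: "(\<integral>\<^sup>+t. h t \<partial>lborel) = (\<integral>\<^sup>+u. ennreal (normal_density 0 \<tau> u * \<bar>u\<bar> powr q * max 0 (L - 2 * \<bar>u\<bar>)) \<partial>lborel)"
    unfolding h_def J_def mult.assoc[of _ _ "\<bar>_\<bar> powr q"]
    by (rule lebesgue_int_h) (auto simp: normal_density_def)
  have "(\<integral>\<^sup>+y. ennreal (Cy y) * h (th y) \<partial>P) = (\<integral>\<^sup>+y. (\<integral>\<^sup>+\<theta>. G \<theta> y \<partial>lborel) \<partial>P)"
    by (simp add: stepD)
  also have "\<dots> = (\<integral>\<^sup>+\<theta>. (\<integral>\<^sup>+y. G \<theta> y \<partial>P) \<partial>lborel)"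
    by (rule LP.Fubini'[OF Gm])
  also have "\<dots> = (\<integral>\<^sup>+\<theta>. (\<integral>\<^sup>+\<xi>. h (\<theta> + W \<xi>) \<partial>std_gauss) \<partial>lborel)"
    by (simp add: stepF)
  finally have main: "(\<integral>\<^sup>+y. ennreal (Cy y) * h (th y) \<partial>P) = (\<integral>\<^sup>+u. ennreal (normal_density 0 \<tau> u * \<bar>u\<bar> powr q * max 0 (L - 2 * \<bar>u\<bar>)) \<partial>lborel)"
    using stepG stepH by simp
  show ?thesis
    using RHS2 unfolding RHS[symmetric] main J_def \<tau>_def S_def .
qed



declare sets_std_gauss[measurable_cong]

lemma obs_meas[measurable]:
  "(\<lambda>x. obs X \<sigma> (fst x) (snd x)) \<in> (PiM UNIV (\<lambda>_::'p::finite. borel) \<Otimes>\<^sub>M PiM UNIV (\<lambda>_::'n::finite. borel)) \<rightarrow>\<^sub>M PiM UNIV (\<lambda>_::'n. (borel :: real measure))"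
  unfolding obs_def by measurable

lemma Ri_meas[measurable]:
  fixes est :: "('n::finite \<Rightarrow> real) \<Rightarrow> ('p::finite \<Rightarrow> real)"
  assumes est[measurable]: "est \<in> PiM UNIV (\<lambda>_. borel) \<rightarrow>\<^sub>M PiM UNIV (\<lambda>_. borel)"
  shows "(\<lambda>\<beta>. \<integral>\<^sup>+\<xi>. ennreal (\<bar>est (obs X \<sigma> \<beta> \<xi>) i - \<beta> i\<bar> powr q) \<partial>std_gauss) \<in> borel_measurable (PiM UNIV (\<lambda>_. borel))"
proof (rule sigma_finite_measure.borel_measurable_nn_integral[OF sf_gauss])
  have eq: "sets (PiM UNIV (\<lambda>_::'p. borel) \<Otimes>\<^sub>M (std_gauss :: ('n \<Rightarrow> real) measure)) = sets (PiM UNIV (\<lambda>_::'p. (borel :: real measure)) \<Otimes>\<^sub>M PiM UNIV (\<lambda>_::'n. (borel :: real measure)))"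
    by (intro sets_pair_measure_cong sets_std_gauss) simp
  show "(\<lambda>(\<beta>, \<xi>). ennreal (\<bar>est (obs X \<sigma> \<beta> \<xi>) i - \<beta> i\<bar> powr q)) \<in> borel_measurable (PiM UNIV (\<lambda>_. borel) \<Otimes>\<^sub>M std_gauss)"
    unfolding measurable_cong_sets[OF eq refl] by measurable
qed

lemma R_meas[measurable]:
  fixes est :: "('n::finite \<Rightarrow> real) \<Rightarrow> ('p::finite \<Rightarrow> real)"
  assumes est[measurable]: "est \<in> PiM UNIV (\<lambda>_. borel) \<rightarrow>\<^sub>M PiM UNIV (\<lambda>_. borel)"
  shows "(\<lambda>\<beta>. \<integral>\<^sup>+\<xi>. ennreal (\<Sum>i\<in>UNIV. \<bar>est (obs X \<sigma> \<beta> \<xi>) i - \<beta> i\<bar> powr q) \<partial>std_gauss) \<in> borel_measurable (PiM UNIV (\<lambda>_. borel))"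
proof (rule sigma_finite_measure.borel_measurable_nn_integral[OF sf_gauss])
  have eq: "sets (PiM UNIV (\<lambda>_::'p. borel) \<Otimes>\<^sub>M (std_gauss :: ('n \<Rightarrow> real) measure)) = sets (PiM UNIV (\<lambda>_::'p. (borel :: real measure)) \<Otimes>\<^sub>M PiM UNIV (\<lambda>_::'n. (borel :: real measure)))"
    by (intro sets_pair_measure_cong sets_std_gauss) simp
  show "(\<lambda>(\<beta>, \<xi>). ennreal (\<Sum>i\<in>UNIV. \<bar>est (obs X \<sigma> \<beta> \<xi>) i - \<beta> i\<bar> powr q)) \<in> borel_measurable (PiM UNIV (\<lambda>_. borel) \<Otimes>\<^sub>M std_gauss)"
    unfolding measurable_cong_sets[OF eq refl] by measurable
qed

lemma prior_bound:
  fixes est :: "('n::finite \<Rightarrow> real) \<Rightarrow> ('p::finite \<Rightarrow> real)" and X :: "'n \<Rightarrow> 'p \<Rightarrow> real"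
    and S :: "'p set" and lw :: "'p \<Rightarrow> ennreal"
  assumes est[measurable]: "est \<in> PiM UNIV (\<lambda>_. borel) \<rightarrow>\<^sub>M PiM UNIV (\<lambda>_. borel)"
    and L: "L > 0" and a: "a > 0" and cS: "card S = s"
    and low: "\<And>i x. i \<in> S \<Longrightarrow> lw i \<le> (\<integral>\<^sup>+\<theta>. (\<integral>\<^sup>+\<xi>. ennreal (\<bar>est (obs X \<sigma> (x(i:=\<theta>)) \<xi>) i - \<theta>\<bar> powr q) \<partial>std_gauss) * indicator {a..a+L} \<theta> \<partial>lborel)"
  shows "(\<Sum>i\<in>S. lw i / ennreal L) \<le> (SUP \<beta>\<in>Omega s a. \<integral>\<^sup>+\<xi>. ennreal (\<Sum>i\<in>UNIV. \<bar>est (obs X \<sigma> \<beta> \<xi>) i - \<beta> i\<bar> powr q) \<partial>std_gauss)"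
proof -
  define M where "M j = (if j \<in> S then uniform_measure lborel {a..a+L} else return borel (0::real))" for j
  define R where "R \<beta> = (\<integral>\<^sup>+\<xi>. ennreal (\<Sum>i\<in>UNIV. \<bar>est (obs X \<sigma> \<beta> \<xi>) i - \<beta> i\<bar> powr q) \<partial>std_gauss)" for \<beta>
  define Ri where "Ri i \<beta> = (\<integral>\<^sup>+\<xi>. ennreal (\<bar>est (obs X \<sigma> \<beta> \<xi>) i - \<beta> i\<bar> powr q) \<partial>std_gauss)" for i \<beta>
  have M_in: "j \<in> S \<Longrightarrow> M j = uniform_measure lborel {a..a+L}" for j by (simp add: M_def)
  have M_out: "j \<notin> S \<Longrightarrow> M j = return borel 0" for j by (simp add: M_def)
  have emL: "emeasure lborel {a..a+L} = ennreal L" using L by simp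
  have Mprob: "prob_space (M j)" for j
    using L by (auto simp: M_def intro!: prob_space_uniform_measure prob_space_return)
  have setsM: "sets (M j) = sets borel" for j by (simp add: M_def)
  interpret PM: product_prob_space M by (intro product_prob_spaceI Mprob)
  have muprob: "prob_space (PiM UNIV M)" by (rule prob_space_PiM) (rule Mprob)
  have muprob': "prob_space (PiM (UNIV - {i}) M)" for i by (rule prob_space_PiM) (rule Mprob)
  have sets_mu: "sets (PiM UNIV M) = sets (PiM UNIV (\<lambda>_. borel))"
    by (intro sets_PiM_cong setsM refl)
  have sets_mu': "sets (PiM (UNIV - {i}) M) = sets (PiM (UNIV - {i}) (\<lambda>_. borel))" for i
    by (intro sets_PiM_cong setsM refl)
  have Rm: "R \<in> borel_measurable (PiM UNIV M)"
    unfolding measurable_cong_sets[OF sets_mu refl] R_def by (rule R_meas[OF est])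
  have Rim: "Ri i \<in> borel_measurable (PiM UNIV M)" for i
    unfolding measurable_cong_sets[OF sets_mu refl] Ri_def by (rule Ri_meas[OF est])
  have AE1: "AE \<beta> in PiM UNIV M. \<forall>j\<in>UNIV. (j \<in> S \<longrightarrow> \<beta> j \<in> {a..a+L}) \<and> (j \<notin> S \<longrightarrow> \<beta> j = 0)"
  proof (rule AE_finite_allI)
    fix j :: 'p
    show "AE \<beta> in PiM UNIV M. (j \<in> S \<longrightarrow> \<beta> j \<in> {a..a+L}) \<and> (j \<notin> S \<longrightarrow> \<beta> j = 0)"
    proof (rule AE_PiM_component[where P="\<lambda>y. (j \<in> S \<longrightarrow> y \<in> {a..a+L}) \<and> (j \<notin> S \<longrightarrow> y = 0)"])
      show "AE y in M j. (j \<in> S \<longrightarrow> y \<in> {a..a+L}) \<and> (j \<notin> S \<longrightarrow> y = 0)"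
      proof (cases "j \<in> S")
        case True
        have "AE y in uniform_measure lborel {a..a+L}. y \<in> {a..a+L}"
          by (rule AE_uniform_measureI) auto
        moreover have "M j = uniform_measure lborel {a..a+L}" using True by (simp add: M_def)
        ultimately show ?thesis using True by (subst M_in[OF True]) simp
      next
        case False
        have "AE y in return borel (0::real). y = 0" by (simp add: AE_return)
        then show ?thesis using False by (subst M_out[OF False]) simp
      qed
    qed (auto intro: Mprob)
  qed simp
  have AE2: "AE \<beta> in PiM UNIV M. \<beta> \<in> Omega s a"
    using AE1
  proof (rule AE_mp, intro AE_I2 impI)
    fix \<beta> :: "'p \<Rightarrow> real"
    assume H: "\<forall>j\<in>UNIV. (j \<in> S \<longrightarrow> \<beta> j \<in> {a..a+L}) \<and> (j \<notin> S \<longrightarrow> \<beta> j = 0)"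
    have sub: "{i. \<beta> i \<noteq> 0} \<subseteq> S" using H by auto
    have "card {i. \<beta> i \<noteq> 0} \<le> card S" by (rule card_mono[OF _ sub]) simp
    moreover have "\<forall>i. \<beta> i \<noteq> 0 \<longrightarrow> \<bar>\<beta> i\<bar> \<ge> a" using H a by force
    ultimately show "\<beta> \<in> Omega s a" by (simp add: Omega_def cS)
  qed
  have upper: "(\<integral>\<^sup>+\<beta>. R \<beta> \<partial>PiM UNIV M) \<le> (SUP \<beta>\<in>Omega s a. R \<beta>)"
  proof -
    have "(\<integral>\<^sup>+\<beta>. R \<beta> \<partial>PiM UNIV M) \<le> (\<integral>\<^sup>+\<beta>. (SUP \<beta>\<in>Omega s a. R \<beta>) \<partial>PiM UNIV M)"
      by (rule nn_integral_mono_AE) (use AE2 in \<open>auto elim!: AE_mp intro: SUP_upper\<close>)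
    also have "\<dots> = (SUP \<beta>\<in>Omega s a. R \<beta>)"
      by (simp add: prob_space.emeasure_space_1[OF muprob])
    finally show ?thesis .
  qed
  have obs1[measurable]: "(\<lambda>\<xi>. obs X \<sigma> \<beta> \<xi>) \<in> PiM UNIV (\<lambda>_. borel) \<rightarrow>\<^sub>M PiM UNIV (\<lambda>_. borel)" for \<beta>
    unfolding obs_def by measurable
  have Rsum: "(\<Sum>i\<in>S. Ri i \<beta>) \<le> R \<beta>" for \<beta>
  proof -
    have "R \<beta> = (\<integral>\<^sup>+\<xi>. (\<Sum>i\<in>UNIV. ennreal (\<bar>est (obs X \<sigma> \<beta> \<xi>) i - \<beta> i\<bar> powr q)) \<partial>std_gauss)"
      unfolding R_def by (intro nn_integral_cong) simp
    also have "\<dots> = (\<Sum>i\<in>UNIV. Ri i \<beta>)"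
      unfolding Ri_def by (rule nn_integral_sum) measurable
    finally have "R \<beta> = (\<Sum>i\<in>UNIV. Ri i \<beta>)" .
    moreover have "(\<Sum>i\<in>S. Ri i \<beta>) \<le> (\<Sum>i\<in>UNIV. Ri i \<beta>)"
      by (rule sum_mono2) auto
    ultimately show ?thesis by simp
  qed
  have lowerS: "(\<Sum>i\<in>S. \<integral>\<^sup>+\<beta>. Ri i \<beta> \<partial>PiM UNIV M) \<le> (\<integral>\<^sup>+\<beta>. R \<beta> \<partial>PiM UNIV M)"
  proof -
    have "(\<Sum>i\<in>S. \<integral>\<^sup>+\<beta>. Ri i \<beta> \<partial>PiM UNIV M) = (\<integral>\<^sup>+\<beta>. (\<Sum>i\<in>S. Ri i \<beta>) \<partial>PiM UNIV M)"
      by (rule nn_integral_sum[symmetric]) (rule Rim)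
    also have "\<dots> \<le> (\<integral>\<^sup>+\<beta>. R \<beta> \<partial>PiM UNIV M)"
      by (intro nn_integral_mono Rsum)
    finally show ?thesis .
  qed
  have per_i: "lw i / ennreal L \<le> (\<integral>\<^sup>+\<beta>. Ri i \<beta> \<partial>PiM UNIV M)" if iS: "i \<in> S" for i
  proof -
    have RimU: "Ri i \<in> borel_measurable (PiM UNIV (\<lambda>_. borel))"
      unfolding Ri_def by (rule Ri_meas[OF est])
    have Rim': "Ri i \<in> borel_measurable (PiM (insert i (UNIV - {i})) M)"
      using Rim[of i] by (simp add: insert_absorb)
    have "(\<integral>\<^sup>+\<beta>. Ri i \<beta> \<partial>PiM (insert i (UNIV - {i})) M) = (\<integral>\<^sup>+x. (\<integral>\<^sup>+\<theta>. Ri i (x(i:=\<theta>)) \<partial>M i) \<partial>PiM (UNIV - {i}) M)"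
      by (rule PM.product_nn_integral_insert[OF _ _ Rim']) auto
    then have eq: "(\<integral>\<^sup>+\<beta>. Ri i \<beta> \<partial>PiM UNIV M) = (\<integral>\<^sup>+x. (\<integral>\<^sup>+\<theta>. Ri i (x(i:=\<theta>)) \<partial>M i) \<partial>PiM (UNIV - {i}) M)"
      by (simp add: insert_absorb)
    have inner: "lw i / ennreal L \<le> (\<integral>\<^sup>+\<theta>. Ri i (x(i:=\<theta>)) \<partial>M i)" for x
    proof -
      have upd[measurable]: "(\<lambda>\<theta>. x(i:=\<theta>)) \<in> borel \<rightarrow>\<^sub>M PiM UNIV (\<lambda>_. (borel :: real measure))"
      proof -
        have "(\<lambda>\<theta> j. (if j = i then \<theta> else x j)) \<in> borel \<rightarrow>\<^sub>M PiM UNIV (\<lambda>_. (borel :: real measure))"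
          by (intro meas_coord) auto
        moreover have "(\<lambda>\<theta>. x(i:=\<theta>)) = (\<lambda>\<theta> j. (if j = i then \<theta> else x j))" by (auto simp: fun_eq_iff)
        ultimately show ?thesis by simp
      qed
      have m1: "(\<lambda>\<theta>. Ri i (x(i:=\<theta>))) \<in> borel_measurable lborel"
        using measurable_compose[OF upd RimU] by simp
      have "(\<integral>\<^sup>+\<theta>. Ri i (x(i:=\<theta>)) \<partial>M i) = (\<integral>\<^sup>+\<theta>. Ri i (x(i:=\<theta>)) * indicator {a..a+L} \<theta> \<partial>lborel) / emeasure lborel {a..a+L}"
        unfolding M_in[OF iS] by (rule nn_integral_uniform_measure[OF m1]) simp
      also have "\<dots> = (\<integral>\<^sup>+\<theta>. (\<integral>\<^sup>+\<xi>. ennreal (\<bar>est (obs X \<sigma> (x(i:=\<theta>)) \<xi>) i - \<theta>\<bar> powr q) \<partial>std_gauss) * indicator {a..a+L} \<theta> \<partial>lborel) / ennreal L"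
        by (simp add: Ri_def emL)
      finally show ?thesis using low[OF iS, of x] by (simp add: divide_right_mono_ennreal)
    qed
    have "lw i / ennreal L = (\<integral>\<^sup>+x. lw i / ennreal L \<partial>PiM (UNIV - {i}) M)"
      by (simp add: prob_space.emeasure_space_1[OF muprob'])
    also have "\<dots> \<le> (\<integral>\<^sup>+x. (\<integral>\<^sup>+\<theta>. Ri i (x(i:=\<theta>)) \<partial>M i) \<partial>PiM (UNIV - {i}) M)"
      by (intro nn_integral_mono inner)
    finally show ?thesis unfolding eq .
  qed
  have "(\<Sum>i\<in>S. lw i / ennreal L) \<le> (\<Sum>i\<in>S. \<integral>\<^sup>+\<beta>. Ri i \<beta> \<partial>PiM UNIV M)"
    by (intro sum_mono per_i)
  also note lowerS
  also note upper
  finally show ?thesis unfolding R_def .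
qed



lemma sq_lower:
  fixes c c0 L q :: real
  assumes L: "L \<ge> 4" and q: "q \<ge> 1"
  shows "ennreal (L\<^sup>2 / 16) \<le> (\<integral>\<^sup>+\<theta>. ennreal (\<bar>c - \<theta>\<bar> powr q) * indicator {c0..c0+L} \<theta> \<partial>lborel)"
proof -
  define t where "t = c0 + L / 2"
  define J where "J = {c0..c0+L}"
  have "ennreal (L\<^sup>2 / 16) = (\<integral>\<^sup>+u. ennreal (L / 4) * indicator {L/4..L/2} u \<partial>lborel)"
    using L by (simp add: nn_integral_cmult_indicator ennreal_mult[symmetric] power2_eq_square)
  also have "\<dots> \<le> (\<integral>\<^sup>+u. ennreal (indicator J (t + u) * indicator J (t - u) * (\<lambda>_. 1) u * \<bar>u\<bar> powr q) \<partial>lborel)"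
  proof (intro nn_integral_mono)
    fix u :: real
    show "ennreal (L / 4) * indicator {L/4..L/2} u \<le> ennreal (indicator J (t + u) * indicator J (t - u) * (\<lambda>_. 1) u * \<bar>u\<bar> powr q)"
    proof (cases "u \<in> {L/4..L/2}")
      case True
      then have u1: "u \<ge> 1" "u \<ge> L / 4" using L by auto
      have "L / 4 \<le> u" using u1 by simp
      also have "u = u powr 1" using u1 by simp
      also have "\<dots> \<le> u powr q" using u1 q by (intro powr_mono) auto
      finally have "L / 4 \<le> \<bar>u\<bar> powr q" using u1 by simp
      moreover have "indicator J (t + u) * indicator J (t - u) = (1::real)"
        using True L by (auto simp: J_def t_def indicator_def)
      ultimately show ?thesis using True by (auto intro: ennreal_leI)
    qed simp
  qed
  also have "\<dots> \<le> (\<integral>\<^sup>+\<theta>. ennreal (indicator J \<theta> * (\<lambda>_. 1) (\<theta> - t) * \<bar>c - \<theta>\<bar> powr q) \<partial>lborel)"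
    by (rule symmetrize) (auto simp: q J_def)
  also have "\<dots> = (\<integral>\<^sup>+\<theta>. ennreal (\<bar>c - \<theta>\<bar> powr q) * indicator {c0..c0+L} \<theta> \<partial>lborel)"
    by (intro nn_integral_cong) (auto simp: J_def indicator_def)
  finally show ?thesis .
qed

lemma zero_col:
  fixes f :: "('n::finite \<Rightarrow> real) \<Rightarrow> real" and m v :: "'n \<Rightarrow> real"
  assumes f[measurable]: "f \<in> borel_measurable (PiM UNIV (\<lambda>_. borel))"
    and v: "\<And>j. v j = 0" and q: "q \<ge> 1" and L: "L \<ge> 4"
  shows "ennreal (L\<^sup>2 / 16)
      \<le> (\<integral>\<^sup>+\<theta>. (\<integral>\<^sup>+\<xi>. ennreal (\<bar>f (\<lambda>j. m j + \<theta> * v j + \<sigma> * \<xi> j) - \<theta>\<bar> powr q) \<partial>std_gauss) * indicator {c0..c0+L} \<theta> \<partial>lborel)"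
proof -
  interpret LG: pair_sigma_finite lborel "std_gauss :: ('n \<Rightarrow> real) measure" by (rule pair_lborel_gauss)
  interpret G: prob_space "std_gauss :: ('n \<Rightarrow> real) measure" by (rule prob_std_gauss)
  define g where "g \<xi> = f (\<lambda>j. m j + \<sigma> * \<xi> j)" for \<xi> :: "'n \<Rightarrow> real"
  have gm[measurable]: "g \<in> borel_measurable (PiM UNIV (\<lambda>_. borel))" unfolding g_def by measurable
  have Hm: "case_prod (\<lambda>\<theta> \<xi>. ennreal (\<bar>g \<xi> - \<theta>\<bar> powr q) * indicator {c0..c0+L} \<theta>) \<in> borel_measurable (lborel \<Otimes>\<^sub>M std_gauss)"
    unfolding measurable_cong_sets[OF sets_pair_gauss refl] by measurable
  have "(\<integral>\<^sup>+\<theta>. (\<integral>\<^sup>+\<xi>. ennreal (\<bar>f (\<lambda>j. m j + \<theta> * v j + \<sigma> * \<xi> j) - \<theta>\<bar> powr q) \<partial>std_gauss) * indicator {c0..c0+L} \<theta> \<partial>lborel)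
      = (\<integral>\<^sup>+\<theta>. (\<integral>\<^sup>+\<xi>. ennreal (\<bar>g \<xi> - \<theta>\<bar> powr q) * indicator {c0..c0+L} \<theta> \<partial>std_gauss) \<partial>lborel)"
    by (intro nn_integral_cong) (simp add: v g_def nn_integral_multc)
  also have "\<dots> = (\<integral>\<^sup>+\<xi>. (\<integral>\<^sup>+\<theta>. ennreal (\<bar>g \<xi> - \<theta>\<bar> powr q) * indicator {c0..c0+L} \<theta> \<partial>lborel) \<partial>std_gauss)"
    by (rule LG.Fubini'[symmetric, OF Hm])
  also have "\<dots> \<ge> (\<integral>\<^sup>+\<xi>. ennreal (L\<^sup>2 / 16) \<partial>(std_gauss :: ('n \<Rightarrow> real) measure))"
    by (intro nn_integral_mono sq_lower L q)
  finally show ?thesis by (simp add: G.emeasure_space_1)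
qed

lemma bochner_le_nn:
  fixes f :: "'a \<Rightarrow> real"
  assumes "\<And>x. f x \<ge> 0" and [measurable]: "f \<in> borel_measurable M"
  shows "ennreal (integral\<^sup>L M f) \<le> (\<integral>\<^sup>+x. ennreal (f x) \<partial>M)"
proof (cases "integrable M f")
  case True
  then show ?thesis using assms by (subst nn_integral_eq_integral) auto
next
  case False
  then show ?thesis by (simp add: not_integrable_integral_eq)
qed

lemma Gpos_eq:
  fixes K :: "real \<Rightarrow> real"
  assumes [measurable]: "K \<in> borel_measurable borel" and Knn: "\<And>u. K u \<ge> 0" and L: "L > 0"
  shows "(\<integral>\<^sup>+u. ennreal (K u * max 0 (L - 2 * \<bar>u\<bar>)) \<partial>lborel) / ennreal L = (\<integral>\<^sup>+u. ennreal (K u * max 0 (1 - 2 * \<bar>u\<bar> / L)) \<partial>lborel)"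
proof -
  have "(\<integral>\<^sup>+u. ennreal (K u * max 0 (L - 2 * \<bar>u\<bar>)) \<partial>lborel) / ennreal L = (\<integral>\<^sup>+u. ennreal (K u * max 0 (L - 2 * \<bar>u\<bar>)) / ennreal L \<partial>lborel)"
    by (rule nn_integral_divide[symmetric]) measurable
  also have "\<dots> = (\<integral>\<^sup>+u. ennreal (K u * max 0 (1 - 2 * \<bar>u\<bar> / L)) \<partial>lborel)"
  proof (intro nn_integral_cong)
    fix u
    have "max 0 (L - 2 * \<bar>u\<bar>) / L = max 0 (1 - 2 * \<bar>u\<bar> / L)" using L
      by (auto simp: max_def field_simps)
    then show "ennreal (K u * max 0 (L - 2 * \<bar>u\<bar>)) / ennreal L = ennreal (K u * max 0 (1 - 2 * \<bar>u\<bar> / L))"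
    proof -
      have "K u * max 0 (L - 2 * \<bar>u\<bar>) / L = K u * max 0 (1 - 2 * \<bar>u\<bar> / L)"
        by (metis times_divide_eq_right \<open>max 0 (L - 2 * \<bar>u\<bar>) / L = max 0 (1 - 2 * \<bar>u\<bar> / L)\<close>)
      then show ?thesis using L Knn[of u] by (subst divide_ennreal) auto
    qed
  qed
  finally show ?thesis .
qed

lemma Gpos_limit:
  fixes K :: "real \<Rightarrow> real"
  assumes [measurable]: "K \<in> borel_measurable borel" and Knn: "\<And>u. K u \<ge> 0"
  shows "incseq (\<lambda>n. (\<integral>\<^sup>+u. ennreal (K u * max 0 (1 - 2 * \<bar>u\<bar> / (4 + real n))) \<partial>lborel))"
    and "(\<integral>\<^sup>+u. ennreal (K u) \<partial>lborel) \<le> (SUP n. (\<integral>\<^sup>+u. ennreal (K u * max 0 (1 - 2 * \<bar>u\<bar> / (4 + real n))) \<partial>lborel))"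
proof -
  define F where "F n u = ennreal (K u * max 0 (1 - 2 * \<bar>u\<bar> / (4 + real n)))" for n u
  have Fm[measurable]: "F n \<in> borel_measurable lborel" for n unfolding F_def by measurable
  have mono: "F n u \<le> F m u" if "n \<le> m" for n m u
  proof -
    have "2 * \<bar>u\<bar> / (4 + real m) \<le> 2 * \<bar>u\<bar> / (4 + real n)"
      using that by (intro divide_left_mono) auto
    then show ?thesis unfolding F_def using Knn[of u]
      by (intro ennreal_leI mult_left_mono) auto
  qed
  have incF: "incseq F" by (auto simp: incseq_def le_fun_def mono)
  show "incseq (\<lambda>n. (\<integral>\<^sup>+u. ennreal (K u * max 0 (1 - 2 * \<bar>u\<bar> / (4 + real n))) \<partial>lborel))"
    unfolding incseq_def by (auto intro!: nn_integral_mono mono[unfolded F_def])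
  have pt: "ennreal (K u) \<le> (SUP n. F n u)" for u
  proof -
    have lim0: "(\<lambda>n. 2 * \<bar>u\<bar> / (4 + real n)) \<longlonglongrightarrow> 0"
      by (intro tendsto_divide_0[OF tendsto_const] filterlim_at_top_imp_at_infinity
            filterlim_tendsto_add_at_top[OF tendsto_const filterlim_real_sequentially])
    have "(\<lambda>n. K u * max 0 (1 - 2 * \<bar>u\<bar> / (4 + real n))) \<longlonglongrightarrow> K u * max 0 (1 - 0)"
      by (intro tendsto_intros lim0)
    then have "(\<lambda>n. F n u) \<longlonglongrightarrow> ennreal (K u)"
      unfolding F_def by (intro tendsto_ennrealI) simp
    then show ?thesis
      by (rule LIMSEQ_le_const2) (intro exI[of _ 0] allI impI SUP_upper; simp)
  qed
  have "(\<integral>\<^sup>+u. ennreal (K u) \<partial>lborel) \<le> (\<integral>\<^sup>+u. (SUP n. F n u) \<partial>lborel)"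
    by (intro nn_integral_mono pt)
  also have "\<dots> = (SUP n. integral\<^sup>N lborel (F n))"
    by (rule nn_integral_monotone_convergence_SUP[OF incF Fm])
  finally show "(\<integral>\<^sup>+u. ennreal (K u) \<partial>lborel) \<le> (SUP n. (\<integral>\<^sup>+u. ennreal (K u * max 0 (1 - 2 * \<bar>u\<bar> / (4 + real n))) \<partial>lborel))"
    unfolding F_def .
qed

lemma Ti_bound:
  fixes \<nu> \<sigma> q :: real
  assumes \<nu>: "\<nu> > 0" and \<sigma>: "\<sigma> > 0" and q: "q \<ge> 1"
  shows "ennreal (sigma_q \<sigma> q powr q) * inverse (ennreal (\<nu> powr q)) \<le> (\<integral>\<^sup>+u. ennreal (normal_density 0 (\<sigma> / \<nu>) u * \<bar>u\<bar> powr q) \<partial>lborel)"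
proof -
  define E where "E = (\<integral>x. normal_density 0 \<sigma> x * \<bar>x\<bar> powr q \<partial>lborel)"
  have E0: "E \<ge> 0" unfolding E_def by (rule Bochner_Integration.integral_nonneg) auto
  have sq: "sigma_q \<sigma> q powr q = E"
    unfolding sigma_q_def E_def[symmetric] using q E0 by (simp add: powr_powr)
  have inv: "inverse (ennreal (\<nu> powr q)) = ennreal (1 / \<nu> powr q)"
    using \<nu> by (simp add: inverse_ennreal inverse_eq_divide)
  have "ennreal E \<le> (\<integral>\<^sup>+x. ennreal (normal_density 0 \<sigma> x * \<bar>x\<bar> powr q) \<partial>lborel)"
    unfolding E_def by (rule bochner_le_nn) (auto simp: normal_density_def)
  then have "ennreal E * ennreal (1 / \<nu> powr q) \<le> (\<integral>\<^sup>+x. ennreal (normal_density 0 \<sigma> x * \<bar>x\<bar> powr q) \<partial>lborel) * ennreal (1 / \<nu> powr q)"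
    by (rule mult_right_mono) simp
  also have "\<dots> = (\<integral>\<^sup>+x. ennreal (normal_density 0 \<sigma> x * \<bar>x\<bar> powr q / \<nu> powr q) \<partial>lborel)"
    by (subst nn_integral_multc[symmetric]) (auto simp: normal_density_def ennreal_mult[symmetric] intro!: nn_integral_cong)
  also have "\<dots> = ennreal \<nu> * (\<integral>\<^sup>+u. ennreal (normal_density 0 \<sigma> (0 + \<nu> * u) * \<bar>0 + \<nu> * u\<bar> powr q / \<nu> powr q) \<partial>lborel)"
    using \<nu> by (subst nn_integral_real_affine[where c=\<nu> and t=0]) (auto simp: normal_density_def)
  also have "\<dots> = (\<integral>\<^sup>+u. ennreal \<nu> * ennreal (normal_density 0 \<sigma> (\<nu> * u) * \<bar>u\<bar> powr q) \<partial>lborel)"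
  proof -
    have p: "\<bar>\<nu> * u\<bar> powr q / \<nu> powr q = \<bar>u\<bar> powr q" for u
      using \<nu> by (simp add: abs_mult powr_mult)
    have p2: "normal_density 0 \<sigma> (0 + \<nu> * u) * \<bar>0 + \<nu> * u\<bar> powr q / \<nu> powr q = normal_density 0 \<sigma> (\<nu> * u) * \<bar>u\<bar> powr q" for u
      using p[of u] by (metis add_0 times_divide_eq_right)
    show ?thesis unfolding p2
      by (rule nn_integral_cmult[symmetric]) (auto simp: normal_density_def)
  qed
  also have "\<dots> = (\<integral>\<^sup>+u. ennreal (normal_density 0 (\<sigma> / \<nu>) u * \<bar>u\<bar> powr q) \<partial>lborel)"
  proof (intro nn_integral_cong)
    fix u
    have "\<nu> * normal_density 0 \<sigma> (\<nu> * u) = normal_density 0 (\<sigma> / \<nu>) u"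
      using \<nu> \<sigma> by (simp add: normal_density_def real_sqrt_mult real_sqrt_divide power_divide power_mult_distrib field_simps)
    then show "ennreal \<nu> * ennreal (normal_density 0 \<sigma> (\<nu> * u) * \<bar>u\<bar> powr q) = ennreal (normal_density 0 (\<sigma> / \<nu>) u * \<bar>u\<bar> powr q)"
      using \<nu> by (simp add: ennreal_mult[symmetric] mult.assoc[symmetric])
  qed
  finally show ?thesis by (simp add: sq inv)
qed



lemma obs_upd:
  "obs X \<sigma> (x(i:=\<theta>)) \<xi> = (\<lambda>j. (\<Sum>k\<in>UNIV. X j k * (x(i:=0)) k) + \<theta> * X j i + \<sigma> * \<xi> j)"
proof -
  have "(\<Sum>k\<in>UNIV. X j k * (x(i:=\<theta>)) k) = (\<Sum>k\<in>UNIV. X j k * (x(i:=0)) k + (if k = i then X j i * \<theta> else 0))" for j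
    by (intro sum.cong) auto
  also have "\<dots> j = (\<Sum>k\<in>UNIV. X j k * (x(i:=0)) k) + \<theta> * X j i" for j
    by (simp add: sum.distrib mult.commute)
  finally show ?thesis unfolding obs_def by (simp add: fun_eq_iff)
qed

lemma per_coord_low:
  fixes est :: "('n::finite \<Rightarrow> real) \<Rightarrow> ('p::finite \<Rightarrow> real)" and X :: "'n \<Rightarrow> 'p \<Rightarrow> real"
  assumes est[measurable]: "est \<in> PiM UNIV (\<lambda>_. borel) \<rightarrow>\<^sub>M PiM UNIV (\<lambda>_. borel)"
    and \<sigma>: "\<sigma> > 0" and q: "q \<ge> 1" and L: "L \<ge> 4"
  shows "(if col_norm X i > 0 then (\<integral>\<^sup>+u. ennreal (normal_density 0 (\<sigma> / col_norm X i) u * \<bar>u\<bar> powr q * max 0 (L - 2 * \<bar>u\<bar>)) \<partial>lborel) else ennreal (L\<^sup>2 / 16))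
     \<le> (\<integral>\<^sup>+\<theta>. (\<integral>\<^sup>+\<xi>. ennreal (\<bar>est (obs X \<sigma> (x(i:=\<theta>)) \<xi>) i - \<theta>\<bar> powr q) \<partial>std_gauss) * indicator {a..a+L} \<theta> \<partial>lborel)"
proof -
  define m where "m j = (\<Sum>k\<in>UNIV. X j k * (x(i:=0)) k)" for j
  define v where "v j = X j i" for j
  define f where "f y = est y i" for y
  have fm[measurable]: "f \<in> borel_measurable (PiM UNIV (\<lambda>_. borel))" unfolding f_def by measurable
  have eq: "(\<integral>\<^sup>+\<theta>. (\<integral>\<^sup>+\<xi>. ennreal (\<bar>est (obs X \<sigma> (x(i:=\<theta>)) \<xi>) i - \<theta>\<bar> powr q) \<partial>std_gauss) * indicator {a..a+L} \<theta> \<partial>lborel)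
     = (\<integral>\<^sup>+\<theta>. (\<integral>\<^sup>+\<xi>. ennreal (\<bar>f (\<lambda>j. m j + \<theta> * v j + \<sigma> * \<xi> j) - \<theta>\<bar> powr q) \<partial>std_gauss) * indicator {a..a+L} \<theta> \<partial>lborel)"
    by (simp add: obs_upd m_def v_def f_def)
  have cn: "col_norm X i = sqrt (\<Sum>j\<in>UNIV. (v j)\<^sup>2)" by (simp add: col_norm_def v_def)
  show ?thesis
  proof (cases "col_norm X i > 0")
    case True
    then have Svv: "(\<Sum>j\<in>UNIV. (v j)\<^sup>2) > 0" unfolding cn by simp
    show ?thesis using True unfolding eq cn
      by (simp add: core[OF fm \<sigma> q Svv])
  next
    case False
    then have "(\<Sum>j\<in>UNIV. (v j)\<^sup>2) = 0" unfolding cn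
      by (metis less_eq_real_def real_sqrt_gt_0_iff sum_nonneg zero_le_power2)
    then have v0: "v j = 0" for j
      using sum_nonneg_eq_0_iff[of UNIV "\<lambda>j. (v j)\<^sup>2"] by simp
    show ?thesis using False unfolding eq
      by (simp add: zero_col[OF fm v0 q L])
  qed
qed

theorem theorem3:
  fixes X :: "'n::finite \<Rightarrow> 'p::finite \<Rightarrow> real"
    and \<sigma> a q :: real and s :: nat
  assumes "\<sigma> > 0" and "a > 0" and "q \<ge> 1" and "s < CARD('p)"
  shows "(INF est \<in> (PiM (UNIV::'n set) (\<lambda>_. borel)) \<rightarrow>\<^sub>M (PiM (UNIV::'p set) (\<lambda>_. borel)).
            SUP \<beta> \<in> Omega s a.
              \<integral>\<^sup>+ \<xi>. ennreal (\<Sum>i\<in>UNIV. \<bar>est (obs X \<sigma> \<beta> \<xi>) i - \<beta> i\<bar> powr q) \<partial>std_gauss)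
         \<ge> (SUP S \<in> {S :: 'p set. card S = s}.
              \<Sum>i\<in>S. ennreal (sigma_q \<sigma> q powr q) * inverse (ennreal (col_norm X i powr q)))"
proof (rule INF_greatest, rule SUP_least)
  fix est :: "('n \<Rightarrow> real) \<Rightarrow> ('p \<Rightarrow> real)" and S :: "'p set"
  assume est[measurable]: "est \<in> (PiM (UNIV::'n set) (\<lambda>_. borel)) \<rightarrow>\<^sub>M (PiM (UNIV::'p set) (\<lambda>_. borel))"
    and "S \<in> {S :: 'p set. card S = s}"
  then have cS: "card S = s" by simp
  have \<sigma>: "\<sigma> > 0" and a: "a > 0" and q: "q \<ge> 1" using assms by auto
  define Ln where "Ln n = 4 + real n" for n :: nat
  define lw where "lw n i = (if col_norm X i > 0 then (\<integral>\<^sup>+u. ennreal (normal_density 0 (\<sigma> / col_norm X i) u * \<bar>u\<bar> powr q * max 0 (Ln n - 2 * \<bar>u\<bar>)) \<partial>lborel) else ennreal ((Ln n)\<^sup>2 / 16))" for n i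
  define Gn where "Gn i n = lw n i / ennreal (Ln n)" for i n
  define B where "B = (SUP \<beta> \<in> Omega s a. \<integral>\<^sup>+ \<xi>. ennreal (\<Sum>i\<in>UNIV. \<bar>est (obs X \<sigma> \<beta> \<xi>) i - \<beta> i\<bar> powr q) \<partial>std_gauss)"
  have Ln4: "Ln n \<ge> 4" for n by (simp add: Ln_def)
  have P1: "(\<Sum>i\<in>S. Gn i n) \<le> B" for n
    unfolding Gn_def B_def
  proof (rule prior_bound[OF est _ a cS])
    show "0 < Ln n" using Ln4[of n] by simp
    fix i x assume "i \<in> S"
    show "lw n i \<le> (\<integral>\<^sup>+\<theta>. (\<integral>\<^sup>+\<xi>. ennreal (\<bar>est (obs X \<sigma> (x(i:=\<theta>)) \<xi>) i - \<theta>\<bar> powr q) \<partial>std_gauss) * indicator {a..a + Ln n} \<theta> \<partial>lborel)"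
      unfolding lw_def by (rule per_coord_low[OF est \<sigma> q Ln4])
  qed
  have P23: "incseq (Gn i) \<and> ennreal (sigma_q \<sigma> q powr q) * inverse (ennreal (col_norm X i powr q)) \<le> (SUP n. Gn i n)" for i
  proof (cases "col_norm X i > 0")
    case True
    define K where "K u = normal_density 0 (\<sigma> / col_norm X i) u * \<bar>u\<bar> powr q" for u
    have Km[measurable]: "K \<in> borel_measurable borel" unfolding K_def normal_density_def by measurable
    have Knn: "K u \<ge> 0" for u by (simp add: K_def)
    have G: "Gn i n = (\<integral>\<^sup>+u. ennreal (K u * max 0 (1 - 2 * \<bar>u\<bar> / (4 + real n))) \<partial>lborel)" for n
      unfolding Gn_def lw_def using True Gpos_eq[OF Km Knn, of "Ln n"] Ln4[of n]
      by (simp add: K_def Ln_def)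
    have "incseq (Gn i)" unfolding G by (rule Gpos_limit(1)[OF Km Knn])
    moreover have "ennreal (sigma_q \<sigma> q powr q) * inverse (ennreal (col_norm X i powr q)) \<le> (SUP n. Gn i n)"
      unfolding G using Ti_bound[OF True \<sigma> q] Gpos_limit(2)[OF Km Knn] by (simp add: K_def)
    ultimately show ?thesis by simp
  next
    case False
    have G: "Gn i n = ennreal (Ln n / 16)" for n
    proof -
      have "ennreal ((Ln n)\<^sup>2 / 16) / ennreal (Ln n) = ennreal ((Ln n)\<^sup>2 / 16 / Ln n)"
        using Ln4[of n] by (intro divide_ennreal) auto
      also have "(Ln n)\<^sup>2 / 16 / Ln n = Ln n / 16"
        using Ln4[of n] by (simp add: power2_eq_square)
      finally show ?thesis unfolding Gn_def lw_def using False by simp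
    qed
    have "incseq (Gn i)" unfolding G incseq_def Ln_def by (auto intro!: ennreal_leI)
    moreover have "(top::ennreal) \<le> (SUP n. Gn i n)"
    proof -
      have "of_nat n \<le> Gn i (16 * n)" for n
        unfolding G Ln_def by (simp add: ennreal_of_nat_eq_real_of_nat ennreal_leI)
      then have "of_nat n \<le> (SUP n. Gn i n)" for n
        by (rule order_trans) (rule SUP_upper, simp)
      then have "(SUP n. of_nat n :: ennreal) \<le> (SUP n. Gn i n)"
        by (rule SUP_least)
      then show ?thesis by (simp add: ennreal_SUP_of_nat_eq_top)
    qed
    then have "ennreal (sigma_q \<sigma> q powr q) * inverse (ennreal (col_norm X i powr q)) \<le> (SUP n. Gn i n)"
      by (rule order_trans[OF top_greatest])
    ultimately show ?thesis by (rule conjI)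
  qed
  have "(\<Sum>i\<in>S. ennreal (sigma_q \<sigma> q powr q) * inverse (ennreal (col_norm X i powr q))) \<le> (\<Sum>i\<in>S. SUP n. Gn i n)"
    by (intro sum_mono) (use P23 in blast)
  also have "\<dots> = (SUP n. \<Sum>i\<in>S. Gn i n)"
    by (rule ennreal_SUP_sum[symmetric]) (use P23 in blast)
  also have "\<dots> \<le> B"
    by (rule SUP_least) (rule P1)
  finally show "(\<Sum>i\<in>S. ennreal (sigma_q \<sigma> q powr q) * inverse (ennreal (col_norm X i powr q))) \<le> (SUP \<beta> \<in> Omega s a. \<integral>\<^sup>+ \<xi>. ennreal (\<Sum>i\<in>UNIV. \<bar>est (obs X \<sigma> \<beta> \<xi>) i - \<beta> i\<bar> powr q) \<partial>std_gauss)"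
    unfolding B_def .
qed


end
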